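(* Let $\mu$ be a log-concave probability measure on $\mathbb{R}^n$. Then for every $\varepsilon\in(0,1)$ and every $x\in\mathbb{R}^n$, \[ \Lambda_\mu^\ast(x)\geqslant (1-\varepsilon)\log\frac{1}{q_\mu(x)}+\log\frac{\varepsilon}{2^{1-\varepsilon}} \] (with the convention $\log(1/0)=+\infty$).
   Context: For a probability measure $\mu$ on $\mathbb{R}^n$ and a random vector $X\sim\mu$: the half-space (Tukey) depth is $q_\mu(x)=\inf\{\mu(H): H \text{ a closed half-space containing } x\}=\inf_{\xi\in S^{n-1}}\mathbb{P}(\langle X,\xi\rangle\geqslant\langle x,\xi\rangle)$; the cumulant generating function is $\Lambda_\mu(\xi)=\log\mathbb{E}e^{\langle X,\xi\rangle}$ (possibly $+\infty$); the Cramér transform is its Legendre transform $\Lambda_\mu^\ast(x)=\sup_{\xi\in\mathbb{R}^n}\big(\langle x,\xi\rangle-\Lambda_\mu(\xi)\big)\in[0,+\infty]$. A Borel measure $\mu$ is log-concave if $\mu((1-\lambda)A+\lambda B)\geqslant\mu(A)^{1-\lambda}\mu(B)^\lambda$ for all Borel $A,B$ and $\lambda\in(0,1)$. *)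

theory Defs
  imports "HOL-Analysis.Analysis" "HOL-Probability.Probability"
begin

text \<open>Log-concavity of a Borel measure. The Minkowski combination of two Borel sets is
analytic, hence universally measurable but not necessarily Borel; we therefore measure it
with the completion of M.\<close>
definition log_concave_measure :: "'a::euclidean_space measure \<Rightarrow> bool" where
  "log_concave_measure M \<longleftrightarrow>
     (\<forall>A B l. A \<in> sets borel \<longrightarrow> B \<in> sets borel \<longrightarrow> 0 < l \<longrightarrow> l < 1 \<longrightarrow>
        measure (completion M) {(1 - l) *\<^sub>R a + l *\<^sub>R b | a b. a \<in> A \<and> b \<in> B}
          \<ge> measure M A powr (1 - l) * measure M B powr l)"

definition tukey_depth :: "'a::euclidean_space measure \<Rightarrow> 'a \<Rightarrow> real" where
  "tukey_depth M x = (INF \<xi>\<in>sphere 0 1. measure M {y. \<xi> \<bullet> y \<ge> \<xi> \<bullet> x})"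

definition cgf :: "'a::euclidean_space measure \<Rightarrow> 'a \<Rightarrow> ereal" where
  "cgf M \<xi> = (let I = (\<integral>\<^sup>+ y. ennreal (exp (\<xi> \<bullet> y)) \<partial>M)
               in if I = \<infinity> then \<infinity> else ereal (ln (enn2real I)))"

definition cramer :: "'a::euclidean_space measure \<Rightarrow> 'a \<Rightarrow> ereal" where
  "cramer M x = (SUP \<xi>. ereal (x \<bullet> \<xi>) - cgf M \<xi>)"

end

theory Submission
  imports Defs
begin


lemma exp_as_integral:
  fixes l y :: real assumes l: "0 < l"
  shows "(\<integral>\<^sup>+ t. ennreal (l * exp (l * t)) * indicator {..y} t \<partial>lborel) = ennreal (exp (l * y))"
proof -
  have "(\<integral>\<^sup>+ t. ennreal (l * exp (l * t)) * indicator {..y} t \<partial>lborel)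
      = ennreal \<bar>-1::real\<bar> * (\<integral>\<^sup>+ x. ennreal (l * exp (l * (0 + -1 * x))) * indicator {..y} (0 + -1 * x) \<partial>lborel)"
    by (rule nn_integral_real_affine) auto
  also have "\<dots> = (\<integral>\<^sup>+ x. ennreal (l * exp (- (l * x))) * indicator {-y..} x \<partial>lborel)"
    by (simp, intro nn_integral_cong) (auto split: split_indicator)
  also have "\<dots> = ennreal (0 - (- exp (- (l * (-y)))))"
  proof (rule nn_integral_FTC_atLeast)
    show "(\<lambda>x. l * exp (- (l * x))) \<in> borel_measurable borel" by measurable
    show "DERIV (\<lambda>x. - exp (- (l * x))) x :> l * exp (- (l * x))" for x
      by (auto intro!: derivative_eq_intros)
    show "0 \<le> l * exp (- (l * x))" for x using l by simp
    show "((\<lambda>x. - exp (- (l * x))) \<longlongrightarrow> 0) at_top" using l by real_asymp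
  qed
  finally show ?thesis by simp
qed

lemma mgf_tail:
  assumes P: "prob_space M" and Y[measurable]: "Y \<in> borel_measurable M" and l: "0 < l"
  shows "(\<integral>\<^sup>+ \<omega>. ennreal (exp (l * Y \<omega>)) \<partial>M)
     = (\<integral>\<^sup>+ t. ennreal (l * exp (l*t)) * emeasure M {\<omega>\<in>space M. t \<le> Y \<omega>} \<partial>lborel)"
proof -
  interpret prob_space M by fact
  interpret pair_sigma_finite lborel M
    by (simp add: pair_sigma_finite.intro lborel.sigma_finite_measure_axioms sigma_finite_measure_axioms)
  have "(\<integral>\<^sup>+ \<omega>. ennreal (exp (l * Y \<omega>)) \<partial>M)
     = (\<integral>\<^sup>+ \<omega>. (\<integral>\<^sup>+ t. ennreal (l * exp (l * t)) * indicator {..Y \<omega>} t \<partial>lborel) \<partial>M)"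
    using exp_as_integral[OF l] by simp
  also have "\<dots> = (\<integral>\<^sup>+ t. (\<integral>\<^sup>+ \<omega>. ennreal (l * exp (l * t)) * indicator {..Y \<omega>} t \<partial>M) \<partial>lborel)"
  proof (rule Fubini')
    have "(\<lambda>(t, \<omega>). ennreal (l * exp (l * t)) * indicator {(t,\<omega>). t \<le> Y \<omega>} (t,\<omega>)) \<in> borel_measurable (lborel \<Otimes>\<^sub>M M)"
      by measurable
    then show "(\<lambda>(t, \<omega>). ennreal (l * exp (l * t)) * indicator {..Y \<omega>} t) \<in> borel_measurable (lborel \<Otimes>\<^sub>M M)"
      by (simp add: indicator_def)
  qed
  also have "\<dots> = (\<integral>\<^sup>+ t. ennreal (l * exp (l*t)) * emeasure M {\<omega>\<in>space M. t \<le> Y \<omega>} \<partial>lborel)"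
  proof (intro nn_integral_cong)
    fix t
    have "(\<integral>\<^sup>+ \<omega>. ennreal (l * exp (l * t)) * indicator {..Y \<omega>} t \<partial>M)
        = (\<integral>\<^sup>+ \<omega>. ennreal (l * exp (l * t)) * indicator {\<omega>\<in>space M. t \<le> Y \<omega>} \<omega> \<partial>M)"
      by (intro nn_integral_cong) (auto split: split_indicator)
    also have "\<dots> = ennreal (l * exp (l * t)) * emeasure M {\<omega>\<in>space M. t \<le> Y \<omega>}"
      by (subst nn_integral_cmult_indicator) auto
    finally show "(\<integral>\<^sup>+ \<omega>. ennreal (l * exp (l * t)) * indicator {..Y \<omega>} t \<partial>M) = ennreal (l * exp (l * t)) * emeasure M {\<omega>\<in>space M. t \<le> Y \<omega>}" .
  qed
  finally show ?thesis .
qed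



lemma lc_ln:
  fixes F :: "real \<Rightarrow> real"
  assumes lc: "\<And>a b l. 0 < l \<Longrightarrow> l < 1 \<Longrightarrow> F ((1-l)*a + l*b) \<ge> F a powr (1-l) * F b powr l"
    and pa: "0 < F a" and pb: "0 < F b" and l: "0 < l" "l < 1"
  shows "(1-l) * ln (F a) + l * ln (F b) \<le> ln (F ((1-l)*a + l*b))"
proof -
  have pos: "0 < F a powr (1-l) * F b powr l" using pa pb by simp
  have "ln (F a powr (1-l) * F b powr l) \<le> ln (F ((1-l)*a + l*b))"
    using lc[OF l, of a b] pos by (subst ln_le_cancel_iff) (auto intro: less_le_trans)
  moreover have "ln (F a powr (1-l) * F b powr l) = (1-l) * ln (F a) + l * ln (F b)"
    using pa pb by (simp add: ln_mult ln_powr)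
  ultimately show ?thesis by simp
qed

lemma ex_inv_Suc: "0 < (x::real) \<Longrightarrow> \<exists>k. inverse (real (Suc k)) < x"
proof -
  assume "0 < x"
  then obtain n where "n > 0" "inverse (real n) < x" using ex_inverse_of_nat_less by blast
  then show ?thesis by (intro exI[of _ "n - 1"]) auto
qed

lemma mgf_bound:
  assumes P: "prob_space M" and Y[measurable]: "Y \<in> borel_measurable M"
    and lc: "\<And>a b l. 0 < l \<Longrightarrow> l < 1 \<Longrightarrow> F ((1-l)*a + l*b) \<ge> F a powr (1-l) * F b powr l"
    and F_def: "\<And>t. F t = measure M {\<omega>\<in>space M. t \<le> Y \<omega>}"
    and q0: "0 < F 0" and e: "0 < \<epsilon>" "\<epsilon> < 1" and eta: "0 < \<eta>"
  shows "\<exists>l\<ge>0. (\<integral>\<^sup>+ \<omega>. ennreal (exp (l * Y \<omega>)) \<partial>M) \<le> ennreal ((1/\<epsilon> + \<eta>) * F 0 powr (1-\<epsilon>))"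
proof -
  interpret prob_space M by fact
  define q where "q = F 0"
  have Fmono: "F b \<le> F a" if "a \<le> b" for a b
    unfolding F_def using that by (intro finite_measure_mono) auto
  have F1: "F t \<le> 1" for t unfolding F_def by simp
  have F0: "0 \<le> F t" for t unfolding F_def by simp
  have qpos: "0 < q" using q0 q_def by simp
  show ?thesis
  proof (cases "q = 1")
    case True
    have "(\<integral>\<^sup>+ \<omega>. ennreal (exp (0 * Y \<omega>)) \<partial>M) = 1" by (simp add: emeasure_space_1)
    moreover have "1 \<le> (1/\<epsilon> + \<eta>) * F 0 powr (1-\<epsilon>)"
    proof -
      have "1 \<le> 1/\<epsilon>" using e by simp
      then show ?thesis using True q_def eta by simp
    qed
    ultimately show ?thesis by (intro exI[of _ 0]) auto
  next
    case False
    then have q1: "q < 1" using F1 q_def by (metis less_eq_real_def)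
    have "(\<lambda>n. measure M {\<omega>\<in>space M. - real n \<le> Y \<omega>}) \<longlonglongrightarrow> measure M (\<Union>n. {\<omega>\<in>space M. - real n \<le> Y \<omega>})"
      by (intro finite_Lim_measure_incseq) (auto simp: incseq_def)
    moreover have "(\<Union>n. {\<omega>\<in>space M. - real n \<le> Y \<omega>}) = space M"
    proof -
      have "\<exists>n. - real n \<le> Y \<omega>" for \<omega>
        using real_arch_simple[of "- Y \<omega>"] by (metis minus_le_iff)
      then show ?thesis by auto
    qed
    ultimately have "(\<lambda>n. F (- real n)) \<longlonglongrightarrow> 1" by (simp add: F_def prob_space)
    then have "eventually (\<lambda>n. q < F (- real n)) sequentially"
      using q1 by (intro order_tendstoD) auto
    then obtain n where n: "q < F (- real n)" by (auto simp: eventually_sequentially)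
    define T where "T = real n + 1"
    have T: "0 < T" "q < F (-T)"
      using n Fmono[of "- T" "- real n"] by (auto simp: T_def)
    have strict: "q < F (-s)" if s: "0 < s" "s \<le> T" for s
    proof (cases "s = T")
      case True then show ?thesis using T by simp
    next
      case False
      then have sT: "s < T" using s by simp
      have "F (-T) powr (s/T) * F 0 powr (1 - s/T) \<le> F ((1 - (1 - s/T)) * (-T) + (1 - s/T) * 0)"
        using lc[of "1 - s/T" "-T" 0] s sT T by (simp add: field_simps)
      also have "(1 - (1 - s/T)) * (-T) + (1 - s/T) * 0 = -s" using T by (simp add: field_simps)
      finally have le: "F (-T) powr (s/T) * q powr (1 - s/T) \<le> F (-s)" by (simp add: q_def)
      have "q powr (s/T) < F (-T) powr (s/T)"
        using T s qpos by (intro powr_less_mono2) auto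
      then have "q powr (s/T) * q powr (1 - s/T) < F (-T) powr (s/T) * q powr (1 - s/T)"
        using qpos by (intro mult_strict_right_mono) auto
      moreover have "q powr (s/T) * q powr (1 - s/T) = q"
        using qpos by (simp add: powr_add[symmetric])
      ultimately show ?thesis using le by simp
    qed
    define \<eta>' where "\<eta>' = min 1 (\<eta>/2)"
    have eta': "0 < \<eta>'" "\<eta>' \<le> 1" "2 * \<eta>' \<le> \<eta>" using eta by (auto simp: \<eta>'_def)
    have "(\<lambda>n. measure M {\<omega>\<in>space M. - (1 / Suc n) \<le> Y \<omega>}) \<longlonglongrightarrow> measure M (\<Inter>n. {\<omega>\<in>space M. - (1 / Suc n) \<le> Y \<omega>})"
    proof (intro finite_Lim_measure_decseq)
      show "decseq (\<lambda>n. {\<omega>\<in>space M. - (1 / Suc n) \<le> Y \<omega>})"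
        unfolding decseq_def
      proof (intro allI impI subsetI)
        fix m n :: nat and \<omega> assume "m \<le> n" "\<omega> \<in> {\<omega>\<in>space M. - (1 / Suc n) \<le> Y \<omega>}"
        moreover have "1 / real (Suc n) \<le> 1 / Suc m" using \<open>m \<le> n\<close> by (simp add: frac_le)
        ultimately show "\<omega> \<in> {\<omega>\<in>space M. - (1 / Suc m) \<le> Y \<omega>}" by auto
      qed
    qed auto
    moreover have "(\<Inter>n. {\<omega>\<in>space M. - (1 / Suc n) \<le> Y \<omega>}) = {\<omega>\<in>space M. 0 \<le> Y \<omega>}"
    proof (intro equalityI subsetI)
      fix \<omega> assume w: "\<omega> \<in> (\<Inter>n. {\<omega>\<in>space M. - (1 / Suc n) \<le> Y \<omega>})"
      show "\<omega> \<in> {\<omega>\<in>space M. 0 \<le> Y \<omega>}"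
      proof (rule ccontr)
        assume "\<omega> \<notin> {\<omega>\<in>space M. 0 \<le> Y \<omega>}"
        then have "Y \<omega> < 0" using w by auto
        then obtain k where k: "inverse (real (Suc k)) < - Y \<omega>"
          using ex_inv_Suc[of "- Y \<omega>"] by auto
        then have k': "1 / real (Suc k) < - Y \<omega>" by (simp add: inverse_eq_divide)
        have "- (1 / real (Suc k)) \<le> Y \<omega>" using w by blast
        with k' show False by linarith
      qed
    next
      fix \<omega> assume "\<omega> \<in> {\<omega>\<in>space M. 0 \<le> Y \<omega>}"
      then show "\<omega> \<in> (\<Inter>n. {\<omega>\<in>space M. - (1 / Suc n) \<le> Y \<omega>})"
        by (auto intro: order_trans[rotated])
    qed
    ultimately have "(\<lambda>n. F (- (1 / Suc n))) \<longlonglongrightarrow> q" by (simp add: F_def q_def)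
    then have ev1: "eventually (\<lambda>n. F (- (1 / Suc n)) < q * (1 + \<eta>')) sequentially"
      using qpos eta' by (intro order_tendstoD) auto
    have ev2: "eventually (\<lambda>n. 1 / real (Suc n) \<le> T) sequentially"
    proof -
      obtain k where "inverse (real (Suc k)) < T" using ex_inv_Suc T by blast
      then have k: "1 / real (Suc k) < T" by (simp add: inverse_eq_divide)
      have "1 / real (Suc n) \<le> T" if "k \<le> n" for n
      proof -
        have "1 / real (Suc n) \<le> 1 / real (Suc k)" using that by (simp add: frac_le)
        then show ?thesis using k by linarith
      qed
      then show ?thesis unfolding eventually_sequentially by blast
    qed
    obtain s where s: "0 < s" "s \<le> T" "F (-s) < q * (1 + \<eta>')"
    proof -
      from eventually_conj[OF ev1 ev2] obtain k where "F (- (1 / Suc k)) < q * (1 + \<eta>')" "1 / real (Suc k) \<le> T"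
        by (auto simp: eventually_sequentially)
      then show ?thesis by (intro that[of "1 / Suc k"]) auto
    qed

    define p where "p = F (-s)"
    have pq: "q < p" using strict s by (simp add: p_def)
    have p1: "p \<le> 1" using F1 by (simp add: p_def)
    have ppos: "0 < p" using pq qpos by simp
    have pq2: "p < q * (1 + \<eta>')" using s by (simp add: p_def)
    define a where "a = ln (p/q) / s"
    have lnpq: "ln (p/q) = ln p - ln q" using ppos qpos by (simp add: ln_div)
    have lnpos: "0 < ln (p/q)" using pq qpos by simp
    have apos: "0 < a" using lnpos s by (simp add: a_def)
    define l where "l = (1-\<epsilon>)*a"
    define b where "b = \<epsilon>*a"
    define t0 where "t0 = ln q / a"
    have lpos: "0 < l" using apos e by (simp add: l_def)
    have bpos: "0 < b" using apos e by (simp add: b_def)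
    have lba: "l - a = - b" by (simp add: l_def b_def algebra_simps)
    have tail1: "F t \<le> q * exp (- a * t)" if t: "0 \<le> t" for t
    proof (cases "F t = 0 \<or> t = 0")
      case True then show ?thesis using qpos q_def by auto
    next
      case False
      then have Ft: "0 < F t" and t': "0 < t" using F0[of t] t by auto
      have "(1 - s/(s+t)) * ln (F (-s)) + (s/(s+t)) * ln (F t) \<le> ln (F ((1 - s/(s+t))*(-s) + (s/(s+t))*t))"
        using s t' ppos Ft by (intro lc_ln[OF lc]) (auto simp: p_def field_simps)
      also have "(1 - s/(s+t))*(-s) + (s/(s+t))*t = 0" using s t' by (simp add: field_simps)
      finally have "(1 - s/(s+t)) * ln p + (s/(s+t)) * ln (F t) \<le> ln q" by (simp add: p_def q_def)
      then have A: "(s+t) * ((1 - s/(s+t)) * ln p + (s/(s+t)) * ln (F t)) \<le> (s+t) * ln q"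
        using s t' by (intro mult_left_mono) auto
      have gen: "(A::real)*((1-w)*X + w*Z) = A*X + (A*w)*(Z-X)" for A w X Z by (simp add: algebra_simps)
      have c: "(s+t)*(s/(s+t)) = s" using s t' by simp
      have "(s+t) * ((1 - s/(s+t)) * ln p + (s/(s+t)) * ln (F t)) = (s+t)*ln p + s*(ln (F t) - ln p)"
        using gen[of "s+t" "s/(s+t)" "ln p" "ln (F t)"] unfolding c .
      also have "\<dots> = t * ln p + s * ln (F t)" by (simp add: algebra_simps)
      finally have "t * ln p + s * ln (F t) \<le> (s+t) * ln q" using A by simp
      then have "ln (F t) \<le> ln q - a * t"
        using s t' by (simp add: a_def lnpq field_simps)
      then have "exp (ln (F t)) \<le> exp (ln q - a * t)" by simp
      then show ?thesis using Ft qpos by (simp add: exp_diff exp_minus field_simps)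
    qed
    have tail2: "F t \<le> q * exp (- a * t)" if t: "t \<le> -s" for t
    proof (cases "t = -s")
      case True
      have "q * exp (- a * t) = q * exp (ln (p/q))" using True s by (simp add: a_def)
      also have "\<dots> = p" using ppos qpos by simp
      finally show ?thesis using True by (simp add: p_def)
    next
      case False
      then have t': "t < -s" using t by simp
      have Ft: "0 < F t" using Fmono[of t "-s"] t ppos by (simp add: p_def)
      have "(1 - (1 + s/t)) * ln (F t) + (1 + s/t) * ln (F 0) \<le> ln (F ((1 - (1 + s/t))*t + (1 + s/t)*0))"
        using s t' Ft qpos q_def by (intro lc_ln[OF lc]) (auto simp: field_simps)
      also have "(1 - (1 + s/t))*t + (1 + s/t)*0 = -s" using s t' by (simp add: field_simps)
      finally have "(- (s/t)) * ln (F t) + (1 + s/t) * ln q \<le> ln p" by (simp add: p_def q_def)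
      then have A: "(-t) * ((- (s/t)) * ln (F t) + (1 + s/t) * ln q) \<le> (-t) * ln p"
        using s t' by (intro mult_left_mono) auto
      have gen: "(A::real)*((-w)*X + (1+w)*Z) = A*Z + (A*w)*(Z-X)" for A w X Z by (simp add: algebra_simps)
      have c: "(-t)*(s/t) = -s" using s t' by simp
      have "(-t) * ((- (s/t)) * ln (F t) + (1 + s/t) * ln q) = (-t)*ln q + (-s)*(ln q - ln (F t))"
        using gen[of "-t" "s/t" "ln (F t)" "ln q"] unfolding c .
      also have "\<dots> = s * ln (F t) - (t + s) * ln q" by (simp add: algebra_simps)
      finally have "s * ln (F t) - (t + s) * ln q \<le> (-t) * ln p" using A by simp
      then have "ln (F t) \<le> ln q - a * t"
        using s t' by (simp add: a_def lnpq field_simps)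
      then have "exp (ln (F t)) \<le> exp (ln q - a * t)" by simp
      then show ?thesis using Ft qpos by (simp add: exp_diff exp_minus field_simps)
    qed
    have pwr: "l * exp (l*t) * F t \<le> l * exp (l*t) * indicator {..t0} t + l * q * exp (- b * t) * indicator {t0..} t
                 + l * p * indicator {-s..0} t" for t
    proof -
      have nn: "0 \<le> l * exp (l*t) * indicator {..t0} t" "0 \<le> l * q * exp (- b * t) * indicator {t0..} t"
        "0 \<le> l * p * indicator {-s..0} t" using lpos qpos ppos by auto
      consider "t \<le> t0" | "t0 < t" "0 \<le> t \<or> t \<le> -s" | "-s < t" "t < 0" by linarith
      then show ?thesis
      proof cases
        case 1
        then have "l * exp (l*t) * F t \<le> l * exp (l*t) * indicator {..t0} t"
          using F1[of t] lpos by simp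
        then show ?thesis using nn by linarith
      next
        case 2
        then have "F t \<le> q * exp (- a * t)" using tail1 tail2 by auto
        then have "l * exp (l*t) * F t \<le> l * exp (l*t) * (q * exp (- a * t))"
          using lpos by (intro mult_left_mono) auto
        also have "\<dots> = l * q * exp (- b * t)"
        proof -
          have "l*t + -a*t = (l - a)*t" by (simp add: algebra_simps)
          then have "exp (l*t) * exp (-a*t) = exp (- b * t)" unfolding lba exp_add[symmetric] by simp
          then show ?thesis by (metis mult.commute mult.left_commute)
        qed
        also have "\<dots> = l * q * exp (- b * t) * indicator {t0..} t" using 2 by simp
        finally show ?thesis using nn by linarith
      next
        case 3
        then have "F t \<le> p" using Fmono[of "-s" t] by (simp add: p_def)
        moreover have "exp (l*t) \<le> 1" using 3 lpos mult_pos_neg[of l t] by simp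
        ultimately have "l * exp (l*t) * F t \<le> l * 1 * p"
          using lpos F0[of t] by (intro mult_mono) auto
        also have "\<dots> = l * p * indicator {-s..0} t" using 3 by simp
        finally show ?thesis using nn by linarith
      qed
    qed
    have I2: "(\<integral>\<^sup>+ t. ennreal (l * q * exp (- b * t)) * indicator {t0..} t \<partial>lborel) = ennreal (l * q * exp (- b * t0) / b)"
    proof -
      have "(\<integral>\<^sup>+ t. ennreal (l * q * exp (- b * t)) * indicator {t0..} t \<partial>lborel)
          = ennreal (0 - (- (l * q / b) * exp (- b * t0)))"
      proof (rule nn_integral_FTC_atLeast)
        show "(\<lambda>t. l * q * exp (- b * t)) \<in> borel_measurable borel" by measurable
        show "DERIV (\<lambda>x. - (l * q / b) * exp (- b * x)) x :> l * q * exp (- b * x)" for x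
        proof -
          have d: "DERIV (\<lambda>x. - (l * q / b) * exp (- b * x)) x :> - (l * q / b) * (exp (- b * x) * (- b))"
            by (auto intro!: derivative_eq_intros)
          have "- (l * q / b) * (exp (- b * x) * (- b)) = l * q * exp (- b * x) * (b / b)" by simp
          also have "\<dots> = l * q * exp (- b * x)" using bpos by simp
          finally show ?thesis using d by simp
        qed
        show "0 \<le> l * q * exp (- b * x)" for x using lpos qpos by simp
        have "((\<lambda>x. exp (- b * x)) \<longlongrightarrow> 0) at_top" using bpos by real_asymp
        then have "((\<lambda>x. - (l * q / b) * exp (- b * x)) \<longlongrightarrow> - (l * q / b) * 0) at_top"
          by (intro tendsto_mult tendsto_const)
        then show "((\<lambda>x. - (l * q / b) * exp (- b * x)) \<longlongrightarrow> 0) at_top" by simp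
      qed
      then show ?thesis by simp
    qed
    have I1: "(\<integral>\<^sup>+ t. ennreal (l * exp (l * t)) * indicator {..t0} t \<partial>lborel) = ennreal (exp (l * t0))"
      by (rule exp_as_integral[OF lpos])
    have I3: "(\<integral>\<^sup>+ t. ennreal (l * p) * indicator {-s..0} t \<partial>lborel) = ennreal (l * p * s)"
      using s lpos ppos by (simp add: nn_integral_cmult_indicator ennreal_mult)
    have E1: "exp (l * t0) = q powr (1-\<epsilon>)"
    proof -
      have "l * t0 = (1-\<epsilon>) * ln q" using apos by (simp add: l_def t0_def)
      then show ?thesis using qpos by (simp add: powr_def)
    qed
    have E2: "l * q * exp (- b * t0) / b = ((1-\<epsilon>)/\<epsilon>) * q powr (1-\<epsilon>)"
    proof -
      have "- b * t0 = (-\<epsilon>) * ln q" using apos by (simp add: b_def t0_def)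
      then have x1: "exp (- b * t0) = q powr (-\<epsilon>)" using qpos by (simp add: powr_def)
      have x2: "q * q powr (-\<epsilon>) = q powr (1-\<epsilon>)"
        using qpos powr_add[of q 1 "-\<epsilon>"] by simp
      have x3: "l / b = (1-\<epsilon>)/\<epsilon>" using apos e by (simp add: l_def b_def)
      have "l * q * exp (- b * t0) / b = (l / b) * (q * exp (- b * t0))" by simp
      also have "\<dots> = ((1-\<epsilon>)/\<epsilon>) * q powr (1-\<epsilon>)" unfolding x1 x2 x3 ..
      finally show ?thesis .
    qed
    have qle: "q \<le> q powr (1-\<epsilon>)"
      using powr_mono'[of "1-\<epsilon>" 1 q] qpos q1 e by simp
    have E3: "l * p * s \<le> \<eta> * q powr (1-\<epsilon>)"
    proof -
      have h1: "l * p * s = (1-\<epsilon>) * ln (p/q) * p" using s by (simp add: l_def a_def)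
      have h2: "(1-\<epsilon>) * ln (p/q) * p \<le> 1 * ln (p/q) * p"
        using e lnpos ppos by (intro mult_right_mono) auto
      have "ln (p/q) \<le> p/q - 1" using ppos qpos by (intro ln_le_minus_one) simp
      moreover have "p/q < 1 + \<eta>'" using pq2 qpos by (simp add: divide_less_eq algebra_simps)
      ultimately have "ln (p/q) \<le> \<eta>'" by linarith
      then have h3: "1 * ln (p/q) * p \<le> \<eta>' * (q * (1 + \<eta>'))"
        using ppos pq2 eta' by (intro mult_mono) auto
      have "l * p * s \<le> \<eta>' * (q * (1 + \<eta>'))" using h1 h2 h3 by linarith
      also have "\<dots> \<le> \<eta>' * (q * 2)" using eta' qpos by (intro mult_left_mono) auto
      also have "\<dots> = (2 * \<eta>') * q" by simp
      also have "\<dots> \<le> \<eta> * q" using eta' qpos by (intro mult_right_mono) auto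
      also have "\<dots> \<le> \<eta> * q powr (1-\<epsilon>)" using eta qle by (intro mult_left_mono) auto
      finally show ?thesis .
    qed
    show ?thesis
    proof (intro exI[of _ l] conjI)
      show "0 \<le> l" using lpos by simp
      have "(\<integral>\<^sup>+ \<omega>. ennreal (exp (l * Y \<omega>)) \<partial>M)
          = (\<integral>\<^sup>+ t. ennreal (l * exp (l*t)) * emeasure M {\<omega>\<in>space M. t \<le> Y \<omega>} \<partial>lborel)"
        by (rule mgf_tail[OF P Y lpos])
      also have "\<dots> \<le> (\<integral>\<^sup>+ t. ennreal (l * exp (l * t)) * indicator {..t0} t + ennreal (l * q * exp (- b * t)) * indicator {t0..} t + ennreal (l * p) * indicator {-s..0} t \<partial>lborel)"
      proof (intro nn_integral_mono)
        fix t
        have "ennreal (l * exp (l*t)) * emeasure M {\<omega>\<in>space M. t \<le> Y \<omega>} = ennreal (l * exp (l*t) * F t)"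
          using lpos F0[of t] by (simp add: F_def emeasure_eq_measure ennreal_mult)
        also have "\<dots> \<le> ennreal (l * exp (l*t) * indicator {..t0} t + l * q * exp (- b * t) * indicator {t0..} t
                 + l * p * indicator {-s..0} t)"
          using pwr[of t] by (rule ennreal_leI)
        also have "\<dots> = ennreal (l * exp (l * t)) * indicator {..t0} t + ennreal (l * q * exp (- b * t)) * indicator {t0..} t + ennreal (l * p) * indicator {-s..0} t"
        proof -
          have ei: "ennreal (A * indicator S t) = ennreal A * indicator S t" if "0 \<le> A" for A and S :: "real set"
            by (simp split: split_indicator)
          have gen3: "\<And>x y z. 0 \<le> x \<Longrightarrow> 0 \<le> y \<Longrightarrow> 0 \<le> z \<Longrightarrow> ennreal (x+y+z) = ennreal x + ennreal y + ennreal z"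
            by simp
          have n1: "0 \<le> l * exp (l*t) * indicator {..t0} t" using lpos by simp
          have n2: "0 \<le> l * q * exp (- b * t) * indicator {t0..} t" using lpos qpos by simp
          have n3: "0 \<le> l * p * indicator {-s..0} t" using lpos ppos by simp
          have e1: "ennreal (l * exp (l*t) * indicator {..t0} t) = ennreal (l * exp (l*t)) * indicator {..t0} t"
            by (rule ei) (use lpos in simp)
          have e2: "ennreal (l * q * exp (- b * t) * indicator {t0..} t) = ennreal (l * q * exp (- b * t)) * indicator {t0..} t"
            by (rule ei) (use lpos qpos in simp)
          have e3: "ennreal (l * p * indicator {-s..0} t) = ennreal (l * p) * indicator {-s..0} t"
            by (rule ei) (use lpos ppos in simp)
          show ?thesis by (simp only: gen3[OF n1 n2 n3] e1 e2 e3)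
        qed
        finally show "ennreal (l * exp (l*t)) * emeasure M {\<omega>\<in>space M. t \<le> Y \<omega>} \<le> \<dots>" .
      qed
      also have "\<dots> = (\<integral>\<^sup>+ t. ennreal (l * exp (l * t)) * indicator {..t0} t \<partial>lborel)
           + (\<integral>\<^sup>+ t. ennreal (l * q * exp (- b * t)) * indicator {t0..} t \<partial>lborel)
           + (\<integral>\<^sup>+ t. ennreal (l * p) * indicator {-s..0} t \<partial>lborel)"
      proof -
        have m1: "(\<lambda>t. ennreal (l * exp (l * t)) * indicator {..t0} t) \<in> borel_measurable lborel" by measurable
        have m2: "(\<lambda>t. ennreal (l * q * exp (- b * t)) * indicator {t0..} t) \<in> borel_measurable lborel" by measurable
        have m3: "(\<lambda>t. ennreal (l * p) * indicator {-s..0} t) \<in> borel_measurable lborel" by measurable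
        have m12: "(\<lambda>t. ennreal (l * exp (l * t)) * indicator {..t0} t + ennreal (l * q * exp (- b * t)) * indicator {t0..} t) \<in> borel_measurable lborel"
          using m1 m2 by (rule borel_measurable_add)
        show ?thesis
          unfolding nn_integral_add[OF m12 m3] nn_integral_add[OF m1 m2] ..
      qed
      also have "\<dots> = ennreal (exp (l * t0)) + ennreal (l * q * exp (- b * t0) / b) + ennreal (l * p * s)"
        unfolding I1 I2 I3 ..
      also have "\<dots> = ennreal (exp (l * t0) + l * q * exp (- b * t0) / b + l * p * s)"
        using lpos qpos bpos ppos s by (simp add: ennreal_plus)
      also have "\<dots> \<le> ennreal ((1/\<epsilon> + \<eta>) * F 0 powr (1-\<epsilon>))"
      proof (rule ennreal_leI)
        have "exp (l * t0) + l * q * exp (- b * t0) / b = (1/\<epsilon>) * q powr (1-\<epsilon>)"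
          unfolding E1 E2 using e by (simp add: field_simps)
        then show "exp (l * t0) + l * q * exp (- b * t0) / b + l * p * s \<le> (1/\<epsilon> + \<eta>) * F 0 powr (1-\<epsilon>)"
        proof -
          have "(1/\<epsilon> + \<eta>) * q powr (1-\<epsilon>) = (1/\<epsilon>) * q powr (1-\<epsilon>) + \<eta> * q powr (1-\<epsilon>)"
            by (simp add: distrib_right)
          then show ?thesis unfolding q_def[symmetric] using E3 \<open>exp (l * t0) + l * q * exp (- b * t0) / b = (1/\<epsilon>) * q powr (1-\<epsilon>)\<close> by linarith
        qed
      qed
      finally show "(\<integral>\<^sup>+ \<omega>. ennreal (exp (l * Y \<omega>)) \<partial>M) \<le> ennreal ((1/\<epsilon> + \<eta>) * F 0 powr (1-\<epsilon>))" .
    qed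
  qed
qed







lemma left_cont:
  fixes Y :: "'a \<Rightarrow> real" and F :: "real \<Rightarrow> real"
  assumes P: "prob_space M" and Y[measurable]: "Y \<in> borel_measurable M"
    and F_def: "\<And>t. F t = measure M {\<omega>\<in>space M. t \<le> Y \<omega>}" and c: "F 0 < c" and T: "0 < T"
  shows "\<exists>s. 0 < s \<and> s \<le> T \<and> F (-s) < c"
proof -
  interpret prob_space M by fact
    have "(\<lambda>n. measure M {\<omega>\<in>space M. - (1 / Suc n) \<le> Y \<omega>}) \<longlonglongrightarrow> measure M (\<Inter>n. {\<omega>\<in>space M. - (1 / Suc n) \<le> Y \<omega>})"
    proof (intro finite_Lim_measure_decseq)
      show "decseq (\<lambda>n. {\<omega>\<in>space M. - (1 / Suc n) \<le> Y \<omega>})"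
        unfolding decseq_def
      proof (intro allI impI subsetI)
        fix m n :: nat and \<omega> assume "m \<le> n" "\<omega> \<in> {\<omega>\<in>space M. - (1 / Suc n) \<le> Y \<omega>}"
        moreover have "1 / real (Suc n) \<le> 1 / Suc m" using \<open>m \<le> n\<close> by (simp add: frac_le)
        ultimately show "\<omega> \<in> {\<omega>\<in>space M. - (1 / Suc m) \<le> Y \<omega>}" by auto
      qed
    qed auto
    moreover have "(\<Inter>n. {\<omega>\<in>space M. - (1 / Suc n) \<le> Y \<omega>}) = {\<omega>\<in>space M. 0 \<le> Y \<omega>}"
    proof (intro equalityI subsetI)
      fix \<omega> assume w: "\<omega> \<in> (\<Inter>n. {\<omega>\<in>space M. - (1 / Suc n) \<le> Y \<omega>})"
      show "\<omega> \<in> {\<omega>\<in>space M. 0 \<le> Y \<omega>}"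
      proof (rule ccontr)
        assume "\<omega> \<notin> {\<omega>\<in>space M. 0 \<le> Y \<omega>}"
        then have "Y \<omega> < 0" using w by auto
        then obtain k where k: "inverse (real (Suc k)) < - Y \<omega>"
          using ex_inv_Suc[of "- Y \<omega>"] by auto
        then have k': "1 / real (Suc k) < - Y \<omega>" by (simp add: inverse_eq_divide)
        have "- (1 / real (Suc k)) \<le> Y \<omega>" using w by blast
        with k' show False by linarith
      qed
    next
      fix \<omega> assume "\<omega> \<in> {\<omega>\<in>space M. 0 \<le> Y \<omega>}"
      then show "\<omega> \<in> (\<Inter>n. {\<omega>\<in>space M. - (1 / Suc n) \<le> Y \<omega>})"
        by (auto intro: order_trans[rotated])
    qed
    ultimately have "(\<lambda>n. F (- (1 / Suc n))) \<longlonglongrightarrow> F 0" by (simp add: F_def)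
    then have ev1: "eventually (\<lambda>n. F (- (1 / Suc n)) < c) sequentially"
      using c by (intro order_tendstoD) auto
    have ev2: "eventually (\<lambda>n. 1 / real (Suc n) \<le> T) sequentially"
    proof -
      obtain k where "inverse (real (Suc k)) < T" using ex_inv_Suc T by blast
      then have k: "1 / real (Suc k) < T" by (simp add: inverse_eq_divide)
      have "1 / real (Suc n) \<le> T" if "k \<le> n" for n
      proof -
        have "1 / real (Suc n) \<le> 1 / real (Suc k)" using that by (simp add: frac_le)
        then show ?thesis using k by linarith
      qed
      then show ?thesis unfolding eventually_sequentially by blast
    qed
    from eventually_conj[OF ev1 ev2] obtain k where "F (- (1 / Suc k)) < c" "1 / real (Suc k) \<le> T"
      by (auto simp: eventually_sequentially)
    then show ?thesis by (intro exI[of _ "1 / Suc k"]) auto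
qed

lemma mgf_zero:
  assumes P: "prob_space M" and Y[measurable]: "Y \<in> borel_measurable M"
    and F_def: "\<And>t. F t = measure M {\<omega>\<in>space M. t \<le> Y \<omega>}" and z: "F 0 = 0" and d: "0 < \<delta>"
  shows "\<exists>l\<ge>0. (\<integral>\<^sup>+ \<omega>. ennreal (exp (l * Y \<omega>)) \<partial>M) \<le> ennreal \<delta>"
proof -
  interpret prob_space M by fact
  obtain s where s: "0 < s" "F (-s) < \<delta>/2" using left_cont[OF P Y F_def, of "\<delta>/2" 1] z d by auto
  define L where "L = ln (\<delta>/2)"
  define l where "l = \<bar>L\<bar> / s"
  have l0: "0 \<le> l" using s by (simp add: l_def)
  have ls: "l * s = \<bar>L\<bar>" using s by (simp add: l_def)
  have els: "exp (- (l * s)) \<le> \<delta>/2"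
  proof -
    have "exp (- (l * s)) \<le> exp L" unfolding ls by simp
    also have "\<dots> = \<delta>/2" using d by (simp add: L_def)
    finally show ?thesis .
  qed
  have AE: "AE \<omega> in M. Y \<omega> < 0"
  proof (rule AE_I')
    show "{\<omega>\<in>space M. 0 \<le> Y \<omega>} \<in> null_sets M"
      using z by (intro null_setsI) (auto simp: F_def emeasure_eq_measure)
  qed auto
  have m1: "(\<lambda>\<omega>. indicator {\<omega>\<in>space M. -s \<le> Y \<omega>} \<omega> :: ennreal) \<in> borel_measurable M" by measurable
  have "(\<integral>\<^sup>+ \<omega>. ennreal (exp (l * Y \<omega>)) \<partial>M)
      \<le> (\<integral>\<^sup>+ \<omega>. indicator {\<omega>\<in>space M. -s \<le> Y \<omega>} \<omega> + ennreal (exp (- (l * s))) \<partial>M)"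
  proof (rule nn_integral_mono_AE)
    show "AE \<omega> in M. ennreal (exp (l * Y \<omega>)) \<le> indicator {\<omega>\<in>space M. -s \<le> Y \<omega>} \<omega> + ennreal (exp (- (l * s)))"
      using AE AE_space
    proof eventually_elim
      case (elim \<omega>)
      show ?case
      proof (cases "-s \<le> Y \<omega>")
        case True
        have "l * Y \<omega> \<le> 0" using l0 elim by (simp add: mult_nonneg_nonpos)
        then have "exp (l * Y \<omega>) \<le> 1" by simp
        then have "ennreal (exp (l * Y \<omega>)) \<le> 1" by (simp add: ennreal_leI)
        also have "\<dots> \<le> indicator {\<omega>\<in>space M. -s \<le> Y \<omega>} \<omega> + ennreal (exp (- (l * s)))"
          using True elim by simp
        finally show ?thesis .
      next
        case False
        then have "l * Y \<omega> \<le> l * (-s)" using l0 by (intro mult_left_mono) auto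
        then have "exp (l * Y \<omega>) \<le> exp (- (l * s))" by simp
        then have "ennreal (exp (l * Y \<omega>)) \<le> ennreal (exp (- (l * s)))" by (rule ennreal_leI)
        also have "\<dots> \<le> indicator {\<omega>\<in>space M. -s \<le> Y \<omega>} \<omega> + ennreal (exp (- (l * s)))" by simp
        finally show ?thesis .
      qed
    qed
  qed
  also have "\<dots> = emeasure M {\<omega>\<in>space M. -s \<le> Y \<omega>} + ennreal (exp (- (l * s)))"
    using nn_integral_add[OF m1, of "\<lambda>_. ennreal (exp (- (l * s)))"] by (simp add: emeasure_space_1)
  also have "\<dots> = ennreal (F (-s) + exp (- (l * s)))"
    by (simp add: F_def emeasure_eq_measure)
  also have "\<dots> \<le> ennreal \<delta>" using s els by (intro ennreal_leI) simp
  finally show ?thesis using l0 by blast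
qed


lemma lc_tail:
  fixes M :: "'a::euclidean_space measure"
  assumes S: "sets M = sets borel" and LC: "log_concave_measure M" and u: "norm u = 1"
    and l: "0 < l" "l < 1"
  shows "measure M {y\<in>space M. (1-l)*a + l*b \<le> u \<bullet> y - u \<bullet> x}
      \<ge> measure M {y\<in>space M. a \<le> u \<bullet> y - u \<bullet> x} powr (1-l) * measure M {y\<in>space M. b \<le> u \<bullet> y - u \<bullet> x} powr l"
proof -
  have sp: "space M = UNIV" using sets_eq_imp_space_eq[OF S] by simp
  define A where "A = {y. a \<le> u \<bullet> y - u \<bullet> x}"
  define B where "B = {y. b \<le> u \<bullet> y - u \<bullet> x}"
  define C where "C = {y. (1-l)*a + l*b \<le> u \<bullet> y - u \<bullet> x}"
  have AB: "A \<in> sets borel" "B \<in> sets borel" unfolding A_def B_def by measurable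
  have CM: "C \<in> sets M" unfolding S C_def by measurable
  have uu: "u \<bullet> u = 1" using u by (simp add: norm_eq_1)
  have mink: "{(1 - l) *\<^sub>R a' + l *\<^sub>R b' | a' b'. a' \<in> A \<and> b' \<in> B} = C"
  proof (intro equalityI subsetI)
    fix z assume "z \<in> {(1 - l) *\<^sub>R a' + l *\<^sub>R b' | a' b'. a' \<in> A \<and> b' \<in> B}"
    then obtain a' b' where z: "z = (1 - l) *\<^sub>R a' + l *\<^sub>R b'" and ab: "a' \<in> A" "b' \<in> B" by blast
    have "u \<bullet> z - u \<bullet> x = (1-l) * (u \<bullet> a' - u \<bullet> x) + l * (u \<bullet> b' - u \<bullet> x)"
      unfolding z by (simp add: inner_add_right algebra_simps)
    moreover have "(1-l) * a \<le> (1-l) * (u \<bullet> a' - u \<bullet> x)" using ab l by (intro mult_left_mono) (auto simp: A_def)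
    moreover have "l * b \<le> l * (u \<bullet> b' - u \<bullet> x)" using ab l by (intro mult_left_mono) (auto simp: B_def)
    ultimately show "z \<in> C" by (simp add: C_def)
  next
    fix y assume y: "y \<in> C"
    define c where "c = (1-l)*a + l*b"
    define a' where "a' = y + (a - c) *\<^sub>R u"
    define b' where "b' = y + (b - c) *\<^sub>R u"
    have ia: "u \<bullet> a' = u \<bullet> y + (a - c)" by (simp add: a'_def inner_add_right uu)
    have ib: "u \<bullet> b' = u \<bullet> y + (b - c)" by (simp add: b'_def inner_add_right uu)
    have "a' \<in> A" using y ia by (simp add: A_def C_def c_def)
    moreover have "b' \<in> B" using y ib by (simp add: B_def C_def c_def)
    moreover have "(1 - l) *\<^sub>R a' + l *\<^sub>R b' = y + ((1-l)*(a-c) + l*(b-c)) *\<^sub>R u"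
      by (simp add: a'_def b'_def scaleR_add_right scaleR_add_left algebra_simps)
    moreover have "(1-l)*(a-c) + l*(b-c) = 0" by (simp add: c_def algebra_simps)
    ultimately show "y \<in> {(1 - l) *\<^sub>R a' + l *\<^sub>R b' | a' b'. a' \<in> A \<and> b' \<in> B}" by force
  qed
  have "measure (completion M) {(1 - l) *\<^sub>R a' + l *\<^sub>R b' | a' b'. a' \<in> A \<and> b' \<in> B}
          \<ge> measure M A powr (1 - l) * measure M B powr l"
    using LC AB l unfolding log_concave_measure_def by blast
  then have "measure M C \<ge> measure M A powr (1 - l) * measure M B powr l"
    unfolding mink using CM by simp
  then show ?thesis by (simp add: sp A_def B_def C_def)
qed

lemma cramer_ge:
  fixes M :: "'a::euclidean_space measure"
  assumes P: "prob_space M" and S: "sets M = sets borel"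
    and bnd: "(\<integral>\<^sup>+ y. ennreal (exp (l * (u \<bullet> y - u \<bullet> x))) \<partial>M) \<le> ennreal B" and B: "0 < B"
  shows "ereal (- ln B) \<le> cramer M x"
proof -
  interpret prob_space M by fact
  define \<xi> where "\<xi> = l *\<^sub>R u"
  have mb: "(\<lambda>y. ennreal (exp (l * (u \<bullet> y - u \<bullet> x)))) \<in> borel_measurable borel" by measurable
  then have meas: "(\<lambda>y. ennreal (exp (l * (u \<bullet> y - u \<bullet> x)))) \<in> borel_measurable M"
    by (subst measurable_cong_sets[OF S refl])
  have mb2: "(\<lambda>y. ennreal (exp (\<xi> \<bullet> y))) \<in> borel_measurable borel" by measurable
  then have meas2: "(\<lambda>y. ennreal (exp (\<xi> \<bullet> y))) \<in> borel_measurable M"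
    by (subst measurable_cong_sets[OF S refl])
  define I where "I = (\<integral>\<^sup>+ y. ennreal (exp (\<xi> \<bullet> y)) \<partial>M)"
  have "I = (\<integral>\<^sup>+ y. ennreal (exp (l * (u \<bullet> y - u \<bullet> x))) * ennreal (exp (l * (u \<bullet> x))) \<partial>M)"
    unfolding I_def
  proof (intro nn_integral_cong)
    fix y
    have "exp (\<xi> \<bullet> y) = exp (l * (u \<bullet> y - u \<bullet> x)) * exp (l * (u \<bullet> x))"
      by (simp add: \<xi>_def exp_add[symmetric] algebra_simps)
    then show "ennreal (exp (\<xi> \<bullet> y)) = ennreal (exp (l * (u \<bullet> y - u \<bullet> x))) * ennreal (exp (l * (u \<bullet> x)))"
      by (simp add: ennreal_mult)
  qed
  also have "\<dots> = (\<integral>\<^sup>+ y. ennreal (exp (l * (u \<bullet> y - u \<bullet> x))) \<partial>M) * ennreal (exp (l * (u \<bullet> x)))"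
    by (rule nn_integral_multc[OF meas])
  also have "\<dots> \<le> ennreal B * ennreal (exp (l * (u \<bullet> x)))"
    using bnd by (intro mult_right_mono) auto
  also have "\<dots> = ennreal (B * exp (l * (u \<bullet> x)))" using B by (simp add: ennreal_mult)
  finally have Ile: "I \<le> ennreal (B * exp (l * (u \<bullet> x)))" .
  have Inz: "I \<noteq> 0"
  proof
    assume "I = 0"
    then have "AE y in M. ennreal (exp (\<xi> \<bullet> y)) = 0" using nn_integral_0_iff_AE[OF meas2] by (simp add: I_def)
    then have "AE y in M. False" by simp
    then show False by simp
  qed
  have Itop: "I < top" using Ile by (simp add: le_less_trans)
  then have Iinf: "I \<noteq> \<infinity>" by simp
  have cgf: "cgf M \<xi> = ereal (ln (enn2real I))"
    using Iinf by (simp add: cgf_def I_def Let_def)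
  have pos: "0 < enn2real I" using Inz Itop by (simp add: enn2real_positive_iff zero_less_iff_neq_zero)
  have le: "enn2real I \<le> B * exp (l * (u \<bullet> x))"
    using Ile B by (metis enn2real_ennreal enn2real_mono ennreal_less_top exp_gt_zero less_le mult_pos_pos)
  have "ln (enn2real I) \<le> ln (B * exp (l * (u \<bullet> x)))"
    using pos le B by simp
  also have "\<dots> = ln B + l * (u \<bullet> x)" using B by (simp add: ln_mult)
  finally have lnle: "ln (enn2real I) \<le> ln B + l * (u \<bullet> x)" .
  have "ereal (- ln B) \<le> ereal (x \<bullet> \<xi>) - cgf M \<xi>"
    unfolding cgf using lnle by (simp add: \<xi>_def inner_commute)
  also have "\<dots> \<le> cramer M x"
    unfolding cramer_def by (rule SUP_upper) simp
  finally show ?thesis .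
qed


lemma dir_setup:
  fixes M :: "'a::euclidean_space measure"
  assumes P: "prob_space M" and S: "sets M = sets borel" and LC: "log_concave_measure M"
    and u: "norm u = 1"
  shows "(\<lambda>y. u \<bullet> y - u \<bullet> x) \<in> borel_measurable M"
    and "\<And>a b l. 0 < l \<Longrightarrow> l < 1 \<Longrightarrow>
       (\<lambda>t. measure M {y\<in>space M. t \<le> u \<bullet> y - u \<bullet> x}) ((1-l)*a + l*b)
     \<ge> (\<lambda>t. measure M {y\<in>space M. t \<le> u \<bullet> y - u \<bullet> x}) a powr (1-l) * (\<lambda>t. measure M {y\<in>space M. t \<le> u \<bullet> y - u \<bullet> x}) b powr l"
    and "(\<lambda>t. measure M {y\<in>space M. t \<le> u \<bullet> y - u \<bullet> x}) 0 = measure M {y. u \<bullet> x \<le> u \<bullet> y}"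
proof -
  have sp: "space M = UNIV" using sets_eq_imp_space_eq[OF S] by simp
  have "(\<lambda>y. u \<bullet> y - u \<bullet> x) \<in> borel_measurable borel" by measurable
  then show "(\<lambda>y. u \<bullet> y - u \<bullet> x) \<in> borel_measurable M"
    by (subst measurable_cong_sets[OF S refl])
  show "\<And>a b l. 0 < l \<Longrightarrow> l < 1 \<Longrightarrow>
       (\<lambda>t. measure M {y\<in>space M. t \<le> u \<bullet> y - u \<bullet> x}) ((1-l)*a + l*b)
     \<ge> (\<lambda>t. measure M {y\<in>space M. t \<le> u \<bullet> y - u \<bullet> x}) a powr (1-l) * (\<lambda>t. measure M {y\<in>space M. t \<le> u \<bullet> y - u \<bullet> x}) b powr l"
    using lc_tail[OF S LC u] by simp
  show "(\<lambda>t. measure M {y\<in>space M. t \<le> u \<bullet> y - u \<bullet> x}) 0 = measure M {y. u \<bullet> x \<le> u \<bullet> y}"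
    by (simp add: sp)
qed

lemma dir_pos:
  fixes M :: "'a::euclidean_space measure"
  assumes P: "prob_space M" and S: "sets M = sets borel" and LC: "log_concave_measure M"
    and u: "norm u = 1" and e: "0 < \<epsilon>" "\<epsilon> < 1" and eta: "0 < \<eta>"
    and pos: "0 < measure M {y. u \<bullet> x \<le> u \<bullet> y}"
  shows "ereal (- ln ((1/\<epsilon> + \<eta>) * measure M {y. u \<bullet> x \<le> u \<bullet> y} powr (1-\<epsilon>))) \<le> cramer M x"
proof -
  note ds = dir_setup[OF P S LC u, where x=x]
  obtain l where l: "(\<integral>\<^sup>+ y. ennreal (exp (l * (u \<bullet> y - u \<bullet> x))) \<partial>M)
      \<le> ennreal ((1/\<epsilon> + \<eta>) * (\<lambda>t. measure M {y\<in>space M. t \<le> u \<bullet> y - u \<bullet> x}) 0 powr (1-\<epsilon>))"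
    using mgf_bound[OF P ds(1) ds(2) refl _ e eta] ds(3) pos by auto
  have B: "0 < (1/\<epsilon> + \<eta>) * measure M {y. u \<bullet> x \<le> u \<bullet> y} powr (1-\<epsilon>)"
    using pos e eta by (intro mult_pos_pos add_pos_pos) auto
  show ?thesis by (rule cramer_ge[OF P S l[unfolded ds(3)] B])
qed

lemma dir_zero:
  fixes M :: "'a::euclidean_space measure"
  assumes P: "prob_space M" and S: "sets M = sets borel" and LC: "log_concave_measure M"
    and u: "norm u = 1" and z: "measure M {y. u \<bullet> x \<le> u \<bullet> y} = 0"
  shows "ereal K \<le> cramer M x"
proof -
  note ds = dir_setup[OF P S LC u, where x=x]
  obtain l where l: "(\<integral>\<^sup>+ y. ennreal (exp (l * (u \<bullet> y - u \<bullet> x))) \<partial>M) \<le> ennreal (exp (- K))"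
    using mgf_zero[OF P ds(1) refl, of "exp (-K)"] ds(3) z by auto
  show ?thesis
    using cramer_ge[OF P S l] by simp
qed


theorem theorem1p1:
  fixes M :: "'a::euclidean_space measure" and x :: 'a and \<epsilon> :: real
  assumes "prob_space M" and "sets M = sets borel"
    and "log_concave_measure M"
    and "0 < \<epsilon>" and "\<epsilon> < 1"
  shows "cramer M x \<ge>
           ereal (1 - \<epsilon>) * (if tukey_depth M x = 0 then \<infinity> else ereal (ln (1 / tukey_depth M x)))
           + ereal (ln (\<epsilon> / 2 powr (1 - \<epsilon>)))"
proof -
  note P = assms(1) and S = assms(2) and LC = assms(3) and e = assms(4,5)
  interpret prob_space M by fact
  define G where "G \<xi> = measure M {y. \<xi> \<bullet> x \<le> \<xi> \<bullet> y}" for \<xi>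
  define q where "q = tukey_depth M x"
  have td: "q = (INF \<xi>\<in>sphere 0 1. G \<xi>)" by (simp add: q_def tukey_depth_def G_def)
  obtain b :: 'a where bB: "b \<in> Basis" using nonempty_Basis by blast
  have ne: "sphere (0::'a) 1 \<noteq> {}" using bB by (auto simp: norm_Basis intro!: exI[of _ b])
  have bdd: "bdd_below (G ` sphere 0 1)" by (intro bdd_belowI2[of _ 0]) (simp add: G_def)
  have G0: "0 \<le> G \<xi>" for \<xi> by (simp add: G_def)
  have q0: "0 \<le> q" unfolding td using ne G0 by (intro cINF_greatest) auto
  show ?thesis
  proof (cases "q = 0")
    case True
    have inf: "cramer M x = \<infinity>"
    proof (rule ereal_top)
      fix K :: real
      define C where "C = exp (-K) / (1/\<epsilon> + 1)"
      have Cpos: "0 < C" using e by (simp add: C_def add_pos_pos)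
      define \<delta> where "\<delta> = C powr (1/(1-\<epsilon>))"
      have dpos: "0 < \<delta>" using Cpos by (simp add: \<delta>_def)
      have dp: "\<delta> powr (1-\<epsilon>) = C"
        using Cpos e by (simp add: \<delta>_def powr_powr)
      obtain u where u: "u \<in> sphere 0 1" "G u < \<delta>"
        using cINF_less_iff[OF ne bdd, of \<delta>] td True dpos by auto
      have nu: "norm u = 1" using u by simp
      show "ereal K \<le> cramer M x"
      proof (cases "G u = 0")
        case True
        then show ?thesis using dir_zero[OF P S LC nu] by (simp add: G_def)
      next
        case False
        then have Gpos: "0 < G u" using G0[of u] by simp
        have c1: "ereal (- ln ((1/\<epsilon> + 1) * G u powr (1-\<epsilon>))) \<le> cramer M x"
          using dir_pos[OF P S LC nu e, of 1] Gpos by (simp add: G_def)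
        have "G u powr (1-\<epsilon>) \<le> \<delta> powr (1-\<epsilon>)"
          using Gpos u e by (intro powr_mono2) auto
        then have "(1/\<epsilon> + 1) * G u powr (1-\<epsilon>) \<le> (1/\<epsilon> + 1) * C"
          unfolding dp using e by (intro mult_left_mono) auto
        also have "\<dots> = exp (-K)"
        proof -
          have "0 < 1/\<epsilon> + 1" using e by (intro add_pos_pos) auto
          then show ?thesis by (simp add: C_def)
        qed
        finally have "ln ((1/\<epsilon> + 1) * G u powr (1-\<epsilon>)) \<le> ln (exp (-K))"
          using Gpos e by (subst ln_le_cancel_iff) (auto intro!: mult_pos_pos add_pos_pos)
        then have "K \<le> - ln ((1/\<epsilon> + 1) * G u powr (1-\<epsilon>))" by simp
        then show ?thesis using c1 by (meson ereal_less_eq(3) order_trans)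
      qed
    qed
    then show ?thesis by simp
  next
    case False
    then have qpos: "0 < q" using q0 by simp
    define c :: real where "c = 2 powr (1/2)"
    have c1: "1 < c" unfolding c_def using powr_less_mono[of 0 "1/2" "2::real"] by simp
    obtain u where u: "u \<in> sphere 0 1" "G u < c * q"
      using cINF_less_iff[OF ne bdd, of "c * q"] td qpos c1 by auto
    have nu: "norm u = 1" using u by simp
    have Gq: "q \<le> G u" unfolding td by (rule cINF_lower[OF bdd u(1)])
    have Gpos: "0 < G u" using Gq qpos by simp
    define \<kappa> :: real where "\<kappa> = 2 powr ((1-\<epsilon>)/2)"
    have k1: "1 < \<kappa>" unfolding \<kappa>_def using powr_less_mono[of 0 "(1-\<epsilon>)/2" "2::real"] e by simp
    define \<eta> where "\<eta> = (\<kappa> - 1) / \<epsilon>"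
    have eta: "0 < \<eta>" using k1 e by (simp add: \<eta>_def)
    have cr: "ereal (- ln ((1/\<epsilon> + \<eta>) * G u powr (1-\<epsilon>))) \<le> cramer M x"
      using dir_pos[OF P S LC nu e eta] Gpos by (simp add: G_def)
    have ke: "1/\<epsilon> + \<eta> = \<kappa> / \<epsilon>" using e by (simp add: \<eta>_def field_simps)
    have cp: "c powr (1-\<epsilon>) = \<kappa>" by (simp add: c_def \<kappa>_def powr_powr)
    have kk: "\<kappa> * \<kappa> = 2 powr (1-\<epsilon>)" by (simp add: \<kappa>_def powr_add[symmetric])
    have "G u powr (1-\<epsilon>) \<le> (c * q) powr (1-\<epsilon>)"
      using Gpos u e by (intro powr_mono2) auto
    also have "\<dots> = \<kappa> * q powr (1-\<epsilon>)" using c1 qpos by (simp add: powr_mult cp)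
    finally have "(\<kappa> / \<epsilon>) * G u powr (1-\<epsilon>) \<le> (\<kappa> / \<epsilon>) * (\<kappa> * q powr (1-\<epsilon>))"
      using k1 e by (intro mult_left_mono) auto
    also have "\<dots> = 2 powr (1-\<epsilon>) * q powr (1-\<epsilon>) / \<epsilon>" using kk by (simp add: field_simps)
    finally have W: "(1/\<epsilon> + \<eta>) * G u powr (1-\<epsilon>) \<le> 2 powr (1-\<epsilon>) * q powr (1-\<epsilon>) / \<epsilon>"
      unfolding ke .
    have "ln ((1/\<epsilon> + \<eta>) * G u powr (1-\<epsilon>)) \<le> ln (2 powr (1-\<epsilon>) * q powr (1-\<epsilon>) / \<epsilon>)"
      using W Gpos e eta qpos by (subst ln_le_cancel_iff) (auto intro!: mult_pos_pos add_pos_pos divide_pos_pos)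
    also have "\<dots> = (1-\<epsilon>) * ln 2 + (1-\<epsilon>) * ln q - ln \<epsilon>"
      using qpos e by (simp add: ln_mult ln_div ln_powr)
    finally have L: "(1-\<epsilon>) * ln (1/q) + ln (\<epsilon> / 2 powr (1-\<epsilon>)) \<le> - ln ((1/\<epsilon> + \<eta>) * G u powr (1-\<epsilon>))"
      using qpos e by (simp add: ln_div ln_powr)
    have "ereal (1 - \<epsilon>) * (if q = 0 then \<infinity> else ereal (ln (1 / q))) + ereal (ln (\<epsilon> / 2 powr (1 - \<epsilon>)))
        = ereal ((1-\<epsilon>) * ln (1/q) + ln (\<epsilon> / 2 powr (1-\<epsilon>)))"
      using False by simp
    also have "\<dots> \<le> cramer M x" using L cr by (meson ereal_less_eq(3) order_trans)
    finally show ?thesis unfolding q_def[symmetric] .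
  qed
qed

end
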